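(* There exists a centred weakly stationary sequence $X_1,X_2,\ldots$ with finite second moments such that $\operatorname{Var}(S_{2^r})/2^r$ converges (to a limit in $(0,\infty)$) as $r\to\infty$, but $\operatorname{Var}(S_n)/n$ does not converge as $n\to\infty$.
   Context: $S_n=X_1+\cdots+X_n$. *)

theory Defs
  imports "HOL-Probability.Probability"
begin

definition partial_sum :: "(nat \<Rightarrow> 'a \<Rightarrow> real) \<Rightarrow> nat \<Rightarrow> 'a \<Rightarrow> real" where
  "partial_sum X n = (\<lambda>\<omega>. \<Sum>i=1..n. X i \<omega>)"

definition centred_weakly_stationary :: "'a measure \<Rightarrow> (nat \<Rightarrow> 'a \<Rightarrow> real) \<Rightarrow> bool" where
  "centred_weakly_stationary M X \<longleftrightarrow>
     (\<forall>i\<ge>1. X i \<in> borel_measurable M) \<and>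
     (\<forall>i\<ge>1. integrable M (\<lambda>\<omega>. (X i \<omega>)^2)) \<and>
     (\<forall>i\<ge>1. prob_space.expectation M (X i) = 0) \<and>
     (\<forall>i\<ge>1. \<forall>j\<ge>1. \<forall>k. prob_space.expectation M (\<lambda>\<omega>. X i \<omega> * X j \<omega>)
                        = prob_space.expectation M (\<lambda>\<omega>. X (i+k) \<omega> * X (j+k) \<omega>))"

end

theory Submission
  imports Defs
begin

lemma integral_bind_pmf_bounded:
  fixes f :: "'b \<Rightarrow> real"
  assumes "\<And>x. \<bar>f x\<bar> \<le> B"
  shows "measure_pmf.expectation (bind_pmf M N) f = measure_pmf.expectation M (\<lambda>x. measure_pmf.expectation (N x) f)"
  unfolding measure_pmf_bind
  apply (rule integral_bind[where K="count_space UNIV" and B=B and B'=1])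
  using assms apply (auto intro: measure_pmf.finite_measure simp: measure_pmf_in_subprob_algebra)
  done

definition tri :: "nat \<Rightarrow> nat \<Rightarrow> real" where
  "tri P x = min (real (x mod P)) (real P - real (x mod P))"

definition per :: "nat \<Rightarrow> nat" where "per k = 2 ^ Suc k"

definition seqf :: "nat \<Rightarrow> nat \<Rightarrow> nat \<Rightarrow> real" where
  "seqf k \<phi> = (\<lambda>i. tri (per k) (\<phi> + i) - tri (per k) (\<phi> + i - 1))"

definition pm :: "(nat \<Rightarrow> real) pmf" where
  "pm = bind_pmf (geometric_pmf (1/2)) (\<lambda>k. map_pmf (seqf k) (pmf_of_set {..<per k}))"

definition avg :: "nat \<Rightarrow> ((nat \<Rightarrow> real) \<Rightarrow> real) \<Rightarrow> real" where
  "avg k f = (\<Sum>\<phi><per k. f (seqf k \<phi>)) / real (per k)"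

lemma per_pos: "per k > 0" by (simp add: per_def)

lemma set_pm: "set_pmf pm = {seqf k \<phi> |k \<phi>. \<phi> < per k}"
proof -
  have ne: "{..<per k} \<noteq> {}" for k using per_pos by auto
  show ?thesis unfolding pm_def
    by (auto simp: set_bind_pmf set_pmf_geometric ne)
qed

lemma expect_sums:
  fixes f :: "(nat \<Rightarrow> real) \<Rightarrow> real"
  assumes B: "\<And>k \<phi>. \<phi> < per k \<Longrightarrow> \<bar>f (seqf k \<phi>)\<bar> \<le> B"
  shows "(\<lambda>k. (1/2)^(k+1) * avg k f) sums measure_pmf.expectation pm f"
proof -
  have B0: "0 \<le> B" using B[of 0 0] per_pos[of 0] by auto
  define g where "g \<omega> = max (-B) (min B (f \<omega>))" for \<omega>
  have gb: "\<bar>g \<omega>\<bar> \<le> B" for \<omega> using B0 by (auto simp: g_def)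
  have fg: "g (seqf k \<phi>) = f (seqf k \<phi>)" if "\<phi> < per k" for k \<phi>
    using B[OF that] by (auto simp: g_def)
  have "measure_pmf.expectation pm f = measure_pmf.expectation pm g"
    by (intro integral_cong_AE) (auto simp: AE_measure_pmf_iff set_pm fg)
  also have "\<dots> = measure_pmf.expectation (geometric_pmf (1/2))
       (\<lambda>k. measure_pmf.expectation (map_pmf (seqf k) (pmf_of_set {..<per k})) g)"
    unfolding pm_def by (rule integral_bind_pmf_bounded[OF gb])
  also have "\<dots> = measure_pmf.expectation (geometric_pmf (1/2)) (\<lambda>k. avg k f)"
  proof -
    have "(\<lambda>k. measure_pmf.expectation (map_pmf (seqf k) (pmf_of_set {..<per k})) g) = (\<lambda>k. avg k f)"
    proof
      fix k
      have ne: "{..<per k} \<noteq> {}" using per_pos by auto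
      show "measure_pmf.expectation (map_pmf (seqf k) (pmf_of_set {..<per k})) g = avg k f"
        using ne by (simp add: integral_pmf_of_set avg_def fg)
    qed
    then show ?thesis by simp
  qed
  finally have E: "measure_pmf.expectation pm f = measure_pmf.expectation (geometric_pmf (1/2)) (\<lambda>k. avg k f)" .
  have ab: "\<bar>avg k f\<bar> \<le> B" for k
  proof -
    have "\<bar>\<Sum>\<phi><per k. f (seqf k \<phi>)\<bar> \<le> (\<Sum>\<phi><per k. B)"
      by (rule order_trans[OF sum_abs]) (intro sum_mono B, auto)
    then have "\<bar>\<Sum>\<phi><per k. f (seqf k \<phi>)\<bar> \<le> B * real (per k)" by (simp add: mult.commute)
    then show ?thesis using per_pos[of k] by (simp add: avg_def abs_divide pos_divide_le_eq)
  qed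
  have pmfg: "pmf (geometric_pmf (1/2)) k = (1/2)^(k+1)" for k by simp
  have "measure_pmf.expectation (geometric_pmf (1/2)) (\<lambda>k. avg k f)
      = (\<integral>k. pmf (geometric_pmf (1/2)) k * avg k f \<partial>count_space UNIV)"
    unfolding measure_pmf_eq_density by (subst integral_density) auto
  moreover have "integrable (count_space UNIV) (\<lambda>k. pmf (geometric_pmf (1/2)) k * avg k f)"
    unfolding integrable_count_space_nat_iff
  proof (rule summable_comparison_test)
    show "summable (\<lambda>k. B * (1/2)^(k+1))" by (intro summable_mult summable_geometric) simp_all
    show "\<exists>N. \<forall>n\<ge>N. norm (norm (pmf (geometric_pmf (1 / 2)) n * avg n f)) \<le> B * (1 / 2) ^ (n + 1)"
    proof (intro exI allI impI)
      fix n :: nat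
      have "norm (norm (pmf (geometric_pmf (1 / 2)) n * avg n f)) = (1/2)^(n+1) * \<bar>avg n f\<bar>"
        by (simp add: abs_mult)
      also have "\<dots> \<le> (1/2)^(n+1) * B" by (rule mult_left_mono[OF ab]) simp
      finally show "norm (norm (pmf (geometric_pmf (1 / 2)) n * avg n f)) \<le> B * (1 / 2) ^ (n + 1)"
        by (simp add: mult.commute)
    qed
  qed
  ultimately have "(\<lambda>k. pmf (geometric_pmf (1/2)) k * avg k f) sums measure_pmf.expectation pm f"
    using E sums_integral_count_space_nat by metis
  then show ?thesis by (simp only: pmfg)
qed


lemma tri_mod: "tri P (x mod P) = tri P x" by (simp add: tri_def)

lemma tri_addP: "tri P (x + P) = tri P x" by (simp add: tri_def)

lemma tri_lt: "x < P \<Longrightarrow> tri P x = min (real x) (real P - real x)" by (simp add: tri_def)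

lemma tri_ge: "P \<le> x \<Longrightarrow> x < 2*P \<Longrightarrow> tri P x = min (real (x-P)) (real P - real (x-P))"
proof -
  assume a: "P \<le> x" "x < 2*P"
  have "x mod P = x - P" using a by (simp add: le_mod_geq mod_less)
  then show ?thesis by (simp add: tri_def)
qed

lemma tri_Suc_bound: assumes "P > 0" shows "\<bar>tri P (Suc x) - tri P x\<bar> \<le> 1"
proof -
  have m: "x mod P < P" using assms by simp
  show ?thesis
  proof (cases "Suc (x mod P) = P")
    case True
    then have "Suc x mod P = 0" by (simp add: mod_Suc)
    then show ?thesis using True unfolding tri_def by (auto simp: min_def)
  next
    case False
    then have "Suc x mod P = Suc (x mod P)" by (simp add: mod_Suc)
    then show ?thesis using False m unfolding tri_def by (auto simp: min_def)
  qed
qed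

lemma tri_add_bound: assumes "P > 0" shows "\<bar>tri P (x + n) - tri P x\<bar> \<le> real n"
proof (induction n)
  case 0 then show ?case by simp
next
  case (Suc n)
  have "\<bar>tri P (Suc (x + n)) - tri P (x + n)\<bar> \<le> 1" by (rule tri_Suc_bound[OF assms])
  then show ?case using Suc by simp
qed

lemma shift_sum:
  fixes G :: "nat \<Rightarrow> real"
  assumes per: "\<And>x. G (x mod P) = G x" and P: "P > 0"
  shows "(\<Sum>\<phi><P. G (\<phi> + c)) = (\<Sum>\<phi><P. G \<phi>)"
proof (induction c)
  case 0 then show ?case by simp
next
  case (Suc c)
  obtain p where p: "P = Suc p" using P by (cases P) auto
  define H where "H x = G (x + c)" for x
  have HP: "H P = H 0" unfolding H_def using per[of "P + c"] per[of c] by simp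
  have "(\<Sum>\<phi><P. G (\<phi> + Suc c)) = (\<Sum>\<phi><Suc p. H (Suc \<phi>))" by (simp add: H_def p)
  also have "\<dots> = (\<Sum>\<phi><p. H (Suc \<phi>)) + H (Suc p)" by simp
  also have "\<dots> = (\<Sum>\<phi><p. H (Suc \<phi>)) + H 0" using HP p by simp
  also have "\<dots> = (\<Sum>\<phi><Suc p. H \<phi>)" by (subst sum.lessThan_Suc_shift) simp
  finally show ?case using Suc by (simp add: H_def p)
qed

definition D :: "nat \<Rightarrow> nat \<Rightarrow> real" where
  "D P n = (\<Sum>\<phi><P. (tri P (\<phi> + n) - tri P \<phi>)^2)"

lemma D_mod: "D P (n mod P) = D P n"
proof -
  have "tri P (\<phi> + n mod P) = tri P (\<phi> + n)" for \<phi>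
    by (metis mod_add_right_eq tri_mod)
  then show ?thesis by (simp add: D_def)
qed

lemma D_0: "D P 0 = 0" by (simp add: D_def)

lemma D_refl: assumes "n \<le> P" "P > 0" shows "D P (P - n) = D P n"
proof -
  define G where "G \<phi> = (tri P (\<phi> + (P - n)) - tri P \<phi>)^2" for \<phi>
  have per: "G (x mod P) = G x" for x
  proof -
    have "tri P (x mod P + (P - n)) = tri P (x + (P - n))"
      by (metis mod_add_left_eq tri_mod)
    then show ?thesis by (simp add: G_def tri_mod)
  qed
  have "D P (P - n) = (\<Sum>\<phi><P. G \<phi>)" by (simp add: D_def G_def)
  also have "\<dots> = (\<Sum>\<phi><P. G (\<phi> + n))" using shift_sum[of G P n] per assms(2) by simp
  also have "\<dots> = D P n"
  proof -
    have "G (\<phi> + n) = (tri P (\<phi> + n) - tri P \<phi>)^2" for \<phi>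
    proof -
      have "\<phi> + n + (P - n) = \<phi> + P" using assms by simp
      then show ?thesis by (simp add: G_def tri_addP power2_commute)
    qed
    then show ?thesis by (simp add: D_def)
  qed
  finally show ?thesis .
qed

lemma sq_sum: "(\<Sum>t<c. (x + 2*real t)^2) = real c*x^2 + 2*x*real c*(real c-1) + 2/3*(real c-1)*real c*(2*real c-1)"
proof (induction c)
  case 0 then show ?case by simp
next
  case (Suc c)
  have "(\<Sum>t<Suc c. (x + 2*real t)^2) = (\<Sum>t<c. (x + 2*real t)^2) + (x + 2*real c)^2"
    by (simp only: sum.lessThan_Suc)
  also have "\<dots> = real c*x^2 + 2*x*real c*(real c-1) + 2/3*(real c-1)*real c*(2*real c-1) + (x + 2*real c)^2"
    by (simp only: Suc)
  also have "\<dots> = real (Suc c)*x^2 + 2*x*real (Suc c)*(real (Suc c)-1) + 2/3*(real (Suc c)-1)*real (Suc c)*(2*real (Suc c)-1)"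
    by (simp add: field_simps power2_eq_square)
  finally show ?case .
qed



lemma D_formula:
  assumes n1: "1 \<le> n" and nH: "n \<le> H"
  shows "D (2*H) n = 2*real H*(real n)^2 - 4/3*((real n)^3 - real n)"
proof -
  define P where "P = 2*H"
  define F where "F \<phi> = (tri P (\<phi> + n) - tri P \<phi>)^2" for \<phi>
  define a where "a = H - n + 1"
  define c where "c = P - n + 1"
  have ab: "a \<le> H" "0 \<le> a" and bc: "H \<le> c" and cP: "c \<le> P"
    using n1 nH by (auto simp: a_def c_def P_def)
  have split: "(\<Sum>\<phi><P. F \<phi>) = sum F {0..<a} + sum F {a..<H} + sum F {H..<c} + sum F {c..<P}"
    using ab bc cP by (simp add: atLeast0LessThan[symmetric] sum.atLeastLessThan_concat)
  have R1: "sum F {0..<a} = real a * (real n)^2"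
  proof -
    have "F \<phi> = (real n)^2" if "\<phi> \<in> {0..<a}" for \<phi>
    proof -
      have h: "\<phi> + n \<le> H" using that n1 nH by (auto simp: a_def)
      have "tri P \<phi> = real \<phi>" using h n1 by (subst tri_lt) (auto simp: P_def min_def)
      moreover have "tri P (\<phi> + n) = real \<phi> + real n" using h n1 by (subst tri_lt) (auto simp: P_def min_def)
      ultimately show ?thesis by (simp add: F_def)
    qed
    then show ?thesis by simp
  qed
  have R3: "sum F {H..<c} = real a * (real n)^2"
  proof -
    have "F \<phi> = (real n)^2" if "\<phi> \<in> {H..<c}" for \<phi>
    proof -
      have h: "\<phi> + n \<le> P" "H \<le> \<phi>" using that n1 nH by (auto simp: c_def P_def)
      have "tri P \<phi> = real P - real \<phi>" using h n1 by (subst tri_lt) (auto simp: P_def min_def)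
      moreover have "tri P (\<phi> + n) = real P - real \<phi> - real n"
      proof (cases "\<phi> + n = P")
        case True then show ?thesis by (simp add: tri_def)
      next
        case False then show ?thesis using h by (subst tri_lt) (auto simp: P_def min_def)
      qed
      ultimately show ?thesis by (simp add: F_def power2_commute)
    qed
    then have "sum F {H..<c} = real (c - H) * (real n)^2" by simp
    moreover have "c - H = a" using n1 nH by (simp add: a_def c_def P_def)
    ultimately show ?thesis by simp
  qed
  define Q where "Q = (\<Sum>t<n-1. (2 - real n + 2*real t)^2)"
  have R2: "sum F {a..<H} = Q"
  proof -
    have "sum F {a..<H} = sum (F \<circ> plus a) {0..<H - a}" by (rule sum.atLeastLessThan_shift_0)
    also have "H - a = n - 1" using n1 nH by (simp add: a_def)
    also have "sum (F \<circ> plus a) {0..<n-1} = Q" unfolding Q_def atLeast0LessThan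
    proof (rule sum.cong[OF refl])
      fix t assume "t \<in> {..<n-1}"
      then have t: "t < n - 1" by simp
      have e1: "tri P (a + t) = real H - real n + 1 + real t"
        using t n1 nH by (subst tri_lt) (auto simp: P_def min_def a_def)
      have e2: "tri P (a + t + n) = real H - 1 - real t"
        using t n1 nH by (subst tri_lt) (auto simp: P_def min_def a_def)
      show "(F \<circ> plus a) t = (2 - real n + 2 * real t)^2"
        unfolding comp_def F_def e1 e2 by (simp add: power2_eq_square algebra_simps)
    qed
    finally show ?thesis .
  qed
  have R4: "sum F {c..<P} = Q"
  proof -
    have "sum F {c..<P} = sum (F \<circ> plus c) {0..<P - c}" by (rule sum.atLeastLessThan_shift_0)
    also have "P - c = n - 1" using n1 nH by (simp add: c_def P_def)
    also have "sum (F \<circ> plus c) {0..<n-1} = Q" unfolding Q_def atLeast0LessThan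
    proof (rule sum.cong[OF refl])
      fix t assume "t \<in> {..<n-1}"
      then have t: "t < n - 1" by simp
      have e1: "tri P (c + t) = real n - 1 - real t"
        using t n1 nH by (subst tri_lt) (auto simp: P_def min_def c_def)
      have e2: "tri P (c + t + n) = 1 + real t"
        using t n1 nH by (subst tri_ge) (auto simp: P_def min_def c_def)
      show "(F \<circ> plus c) t = (2 - real n + 2 * real t)^2"
        unfolding comp_def F_def e1 e2 by (simp add: power2_eq_square algebra_simps)
    qed
    finally show ?thesis .
  qed
  have Qv: "Q = real (n-1)*(2 - real n)^2 + 2*(2 - real n)*real (n-1)*(real (n-1)-1) + 2/3*(real (n-1)-1)*real (n-1)*(2*real (n-1)-1)"
    unfolding Q_def by (rule sq_sum)
  have "D (2*H) n = (\<Sum>\<phi><P. F \<phi>)" by (simp add: D_def F_def P_def)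
  also have "\<dots> = 2 * real a * (real n)^2 + 2 * Q" using split R1 R2 R3 R4 by simp
  also have "\<dots> = 2*real H*(real n)^2 - 4/3*((real n)^3 - real n)"
    using n1 nH by (simp add: Qv a_def of_nat_diff power2_eq_square power3_eq_cube field_simps)
  finally show ?thesis .
qed



definition w :: "nat \<Rightarrow> nat \<Rightarrow> real" where
  "w k n = (1/2)^(k+1) * (D (per k) n / real (per k))"

lemma per_eq: "per k = 2 * 2^k" by (simp add: per_def)

lemma pow_facts:
  "(1/2::real)^j = 1/2^j" "(4::real)^j = (2^j)^2" "(1/4::real)^j = 1/(2^j)^2"
proof -
  show a: "(1/2::real)^j = 1/2^j" by (simp add: power_one_over)
  show b: "(4::real)^j = (2^j)^2"
    by (metis power_mult_distrib power2_eq_square numeral_Bit0_eq_double mult_2 power_even_eq power_mult)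
  show "(1/4::real)^j = 1/(2^j)^2" using b by (simp add: power_one_over)
qed
lemma termA: "w (j + r) (2^r) = (2^r/2) * (1/2)^j + (-(2^r - 1/2^r)/3) * (1/4::real)^j"
proof -
  have p: "per (j+r) = 2*(2^j*2^r)" by (simp add: per_eq power_add)
  have "D (per (j+r)) (2^r) = 2*real (2^j*2^r::nat)*(real (2^r::nat))^2 - 4/3*((real (2^r::nat))^3 - real (2^r::nat))"
  proof -
    have "(1::nat) \<le> 2^r" by simp
    moreover have "(2::nat)^r \<le> 2^j*2^r" by simp
    ultimately show ?thesis unfolding p by (rule D_formula)
  qed
  then have Dv: "D (per (j+r)) (2^r) = 2*(2^j*2^r)*(2^r)^2 - 4/3*((2^r)^3 - (2::real)^r)" by (simp only: of_nat_mult of_nat_power of_nat_numeral)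
  define x :: real where "x = 2^r"
  define y :: real where "y = 2^j"
  have xp: "x > 0" "y > 0" by (auto simp: x_def y_def)
  have "w (j + r) (2^r) = (1/(2*y*x)) * ((2*y*x*x^2 - 4/3*(x^3 - x)) / (2*y*x))"
  proof -
    have rp: "real (per (j+r)) = 2*y*x" by (simp add: p x_def y_def)
    have hp: "(1/2::real)^(j+r+1) = 1/(2*y*x)" by (simp add: power_add power_one_over x_def y_def)
    show ?thesis unfolding w_def Dv rp hp unfolding x_def[symmetric] y_def[symmetric] by simp
  qed
  also have "\<dots> = (x/2) * (1/y) + (-(x - 1/x)/3) * (1/y^2)"
    using xp by (simp add: field_simps power2_eq_square power3_eq_cube)
  finally show ?thesis by (simp only: pow_facts(1) pow_facts(3) x_def y_def)
qed



lemma D_zero: assumes "per k dvd n" shows "D (per k) n = 0"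
proof -
  have "D (per k) n = D (per k) (n mod per k)" by (rule D_mod[symmetric])
  also have "\<dots> = 0" using assms by (simp add: D_0)
  finally show ?thesis .
qed

lemma per_dvd: "k < r \<Longrightarrow> per k dvd 2^r"
  unfolding per_def by (rule le_imp_power_dvd) (simp add: Suc_leI)

lemma w_zeroA: "k < r \<Longrightarrow> w k (2^r) = 0"
  using D_zero[OF per_dvd] by (simp add: w_def)

lemma w_zeroB: "k < r \<Longrightarrow> w k (3*2^r) = 0"
proof -
  assume "k < r"
  then have "per k dvd 3*2^r" using per_dvd by (simp add: dvd_mult)
  then show ?thesis using D_zero by (simp add: w_def)
qed

lemma termB0: "w r (3*2^r) = 2^r/6 + 1/(3*2^r)"
proof -
  have p: "per r = 2*2^r" by (simp add: per_eq)
  have m: "(3*2^r) mod (per r) = 2^r" unfolding p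
  proof -
    have "(3*2^r::nat) = 2^r + 1 * (2*2^r)" by simp
    then show "(3*2^r) mod (2*2^r) = (2^r::nat)" by (metis mod_mult_self1 mod_less less_mult_imp_div_less
          power_not_zero zero_neq_numeral mult_2 less_add_same_cancel1 nat_0_less_mult_iff zero_less_numeral
          zero_less_power div_less mult_eq_0_iff less_numeral_extra(1) mult_numeral_1 rel_simps(76))
  qed
  have "D (per r) (3*2^r) = D (per r) (2^r)" using D_mod[of "per r" "3*2^r"] m by simp
  also have "\<dots> = 2*real (2^r::nat)*(real (2^r::nat))^2 - 4/3*((real (2^r::nat))^3 - real (2^r::nat))"
  proof -
    have "(1::nat) \<le> 2^r" by simp
    then show ?thesis unfolding p by (rule D_formula) simp
  qed
  finally have Dv: "D (per r) (3*2^r) = 2*2^r*(2^r)^2 - 4/3*((2^r)^3 - (2::real)^r)"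
    by (simp only: of_nat_mult of_nat_power of_nat_numeral)
  define x :: real where "x = 2^r"
  have xp: "x > 0" by (auto simp: x_def)
  have rp: "real (per r) = 2*x" by (simp add: p x_def)
  have hp: "(1/2::real)^(r+1) = 1/(2*x)" by (simp add: power_add power_one_over x_def)
  have "w r (3*2^r) = (1/(2*x)) * ((2*x*x^2 - 4/3*(x^3 - x)) / (2*x))"
    unfolding w_def Dv rp hp unfolding x_def[symmetric] by simp
  also have "\<dots> = x/6 + 1/(3*x)" using xp by (simp add: field_simps power2_eq_square power3_eq_cube)
  finally show ?thesis by (simp only: x_def)
qed

lemma termB1: "w (r+1) (3*2^r) = 2^r/6 + 1/(12*2^r)"
proof -
  have p: "per (r+1) = 2*(2*2^r)" by (simp add: per_eq)
  have n: "(3*2^r::nat) = per (r+1) - 2^r" unfolding p by simp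
  have "D (per (r+1)) (3*2^r) = D (per (r+1)) (2^r)"
    unfolding n by (rule D_refl) (auto simp: per_def)
  also have "\<dots> = 2*real (2*2^r::nat)*(real (2^r::nat))^2 - 4/3*((real (2^r::nat))^3 - real (2^r::nat))"
  proof -
    have "(1::nat) \<le> 2^r" by simp
    moreover have "(2::nat)^r \<le> 2*2^r" by simp
    ultimately show ?thesis unfolding p by (rule D_formula)
  qed
  finally have Dv: "D (per (r+1)) (3*2^r) = 2*(2*2^r)*(2^r)^2 - 4/3*((2^r)^3 - (2::real)^r)"
    by (simp only: of_nat_mult of_nat_power of_nat_numeral)
  define x :: real where "x = 2^r"
  have xp: "x > 0" by (auto simp: x_def)
  have rp: "real (per (r+1)) = 4*x" unfolding p by (simp add: x_def)
  have hp: "(1/2::real)^(r+1+1) = 1/(4*x)" by (simp add: power_add power_one_over x_def)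
  have "w (r+1) (3*2^r) = (1/(4*x)) * ((2*(2*x)*x^2 - 4/3*(x^3 - x)) / (4*x))"
    unfolding w_def Dv rp hp unfolding x_def[symmetric] by simp
  also have "\<dots> = x/6 + 1/(12*x)" using xp by (simp add: field_simps power2_eq_square power3_eq_cube)
  finally show ?thesis by (simp only: x_def)
qed

lemma termB2: "w (j+r+2) (3*2^r) = (9*2^r/8) * (1/2)^j + (-(9*2^r - 1/2^r)/16) * (1/4::real)^j"
proof -
  have p: "per (j+r+2) = 2*(4*(2^j*2^r))" by (simp add: per_eq power_add)
  have "D (per (j+r+2)) (3*2^r) = 2*real (4*(2^j*2^r)::nat)*(real (3*2^r::nat))^2 - 4/3*((real (3*2^r::nat))^3 - real (3*2^r::nat))"
  proof -
    have "(1::nat) \<le> 3*2^r" by simp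
    moreover have "(3::nat)*2^r \<le> 4*(2^j*2^r)"
    proof -
      have "(3::nat)*2^r \<le> 4*(1*2^r)" by simp
      also have "\<dots> \<le> 4*(2^j*2^r)" by (intro mult_left_mono) simp_all
      finally show ?thesis .
    qed
    ultimately show ?thesis unfolding p by (rule D_formula)
  qed
  then have Dv: "D (per (j+r+2)) (3*2^r) = 2*(4*(2^j*2^r))*(3*2^r)^2 - 4/3*((3*2^r)^3 - 3*(2::real)^r)"
    by (simp only: of_nat_mult of_nat_power of_nat_numeral)
  define x :: real where "x = 2^r"
  define y :: real where "y = 2^j"
  have xp: "x > 0" "y > 0" by (auto simp: x_def y_def)
  have rp: "real (per (j+r+2)) = 8*y*x" unfolding p by (simp add: x_def y_def)
  have hp: "(1/2::real)^(j+r+2+1) = 1/(8*y*x)" by (simp add: power_add power_one_over x_def y_def)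
  have "w (j+r+2) (3*2^r) = (1/(8*y*x)) * ((2*(4*(y*x))*(3*x)^2 - 4/3*((3*x)^3 - 3*x)) / (8*y*x))"
    unfolding w_def Dv rp hp unfolding x_def[symmetric] y_def[symmetric] by simp
  also have "\<dots> = (9*x/8) * (1/y) + (-(9*x - 1/x)/16) * (1/y^2)"
    using xp by (simp add: field_simps power2_eq_square power3_eq_cube)
  finally show ?thesis by (simp only: pow_facts(1) pow_facts(3) x_def y_def)
qed



lemma geo2: "(\<lambda>j. (1/2::real)^j) sums 2" using geometric_sums[of "1/2::real"] by simp
lemma geo4: "(\<lambda>j. (1/4::real)^j) sums (4/3)" using geometric_sums[of "1/4::real"] by simp

lemma sumA: "(\<lambda>k. w k (2^r)) sums (5/9*2^r + 4/9/2^r)"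
proof -
  have "(\<lambda>j. w (j+r) (2^r)) sums ((2^r/2)*2 + (-(2^r - 1/2^r)/3)*(4/3::real))"
    unfolding termA by (intro sums_add sums_mult geo2 geo4)
  then have "(\<lambda>k. w k (2^r)) sums ((2^r/2)*2 + (-(2^r - 1/2^r)/3)*(4/3::real) + (\<Sum>k<r. w k (2^r)))"
    using sums_iff_shift[of "\<lambda>k. w k (2^r)" r] by blast
  moreover have "(\<Sum>k<r. w k (2^r)) = 0" by (simp add: w_zeroA)
  moreover have "(2^r/2)*2 + (-(2^r - 1/2^r)/3)*(4/3::real) = 5/9*2^r + 4/9/2^r"
    by (simp add: field_simps)
  ultimately show ?thesis by simp
qed

lemma sumB: "(\<lambda>k. w k (3*2^r)) sums (11/6*2^r + 1/2/2^r)"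
proof -
  define g where "g j = w (j + r) (3*2^r)" for j
  have "(\<lambda>j. g (j+2)) sums ((9*2^r/8)*2 + (-(9*2^r - 1/2^r)/16)*(4/3::real))"
  proof -
    have "(\<lambda>j. g (j+2)) = (\<lambda>j. (9*2^r/8) * (1/2)^j + (-(9*2^r - 1/2^r)/16) * (1/4::real)^j)"
    proof
      fix j show "g (j+2) = (9*2^r/8) * (1/2)^j + (-(9*2^r - 1/2^r)/16) * (1/4::real)^j"
        using termB2[of j r] by (simp add: g_def add.commute add.left_commute)
    qed
    then show ?thesis by (simp only:) (intro sums_add sums_mult geo2 geo4)
  qed
  then have "g sums ((9*2^r/8)*2 + (-(9*2^r - 1/2^r)/16)*(4/3::real) + (\<Sum>j<2. g j))"
    using sums_iff_shift[of g 2] by blast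
  moreover have "(\<Sum>j<2. g j) = (2^r/6 + 1/(3*2^r)) + (2^r/6 + 1/(12*2^r))"
    using termB0[of r] termB1[of r] by (simp add: g_def numeral_2_eq_2 add.commute)
  moreover have "(9*2^r/8)*2 + (-(9*2^r - 1/2^r)/16)*(4/3::real) + ((2^r/6 + 1/(3*2^r)) + (2^r/6 + 1/(12*2^r)))
      = 11/6*2^r + 1/2/2^r"
  proof -
    define x :: real where "x = 2^r"
    have "x > 0" by (simp add: x_def)
    then have "(9*x/8)*2 + (-(9*x - 1/x)/16)*(4/3::real) + ((x/6 + 1/(3*x)) + (x/6 + 1/(12*x))) = 11/6*x + 1/2/x"
      by (simp add: field_simps)
    then show ?thesis by (simp only: x_def)
  qed
  ultimately have "g sums (11/6*2^r + 1/2/2^r)" by simp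
  moreover have "g = (\<lambda>j. w (j + r) (3*2^r))" by (simp add: g_def fun_eq_iff)
  ultimately have "(\<lambda>j. w (j + r) (3*2^r)) sums (11/6*2^r + 1/2/2^r)" by simp
  then have "(\<lambda>k. w k (3*2^r)) sums (11/6*2^r + 1/2/2^r + (\<Sum>k<r. w k (3*2^r)))"
    using sums_iff_shift[of "\<lambda>k. w k (3*2^r)" r] by blast
  moreover have "(\<Sum>k<r. w k (3*2^r)) = 0" by (simp add: w_zeroB)
  ultimately show ?thesis by simp
qed



definition X0 :: "nat \<Rightarrow> (nat \<Rightarrow> real) \<Rightarrow> real" where "X0 i \<omega> = \<omega> i"

lemma tri_per: "tri P (x mod P + m) = tri P (x + m)"
  by (metis mod_add_left_eq tri_mod)

lemma seqf_alt: "1 \<le> i \<Longrightarrow> seqf k \<phi> i = tri (per k) (\<phi> + i) - tri (per k) (\<phi> + (i - 1))"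
  by (simp add: seqf_def)

lemma seqf_bound: "1 \<le> i \<Longrightarrow> \<bar>seqf k \<phi> i\<bar> \<le> 1"
proof -
  assume i: "1 \<le> i"
  have "\<phi> + i = Suc (\<phi> + (i - 1))" using i by simp
  then show ?thesis using tri_Suc_bound[OF per_pos, of k "\<phi> + (i - 1)"] seqf_alt[OF i] by simp
qed

lemma psum: "partial_sum X0 n (seqf k \<phi>) = tri (per k) (\<phi> + n) - tri (per k) \<phi>"
proof (induction n)
  case 0 then show ?case by (simp add: partial_sum_def)
next
  case (Suc n)
  have "partial_sum X0 (Suc n) (seqf k \<phi>) = partial_sum X0 n (seqf k \<phi>) + seqf k \<phi> (Suc n)"
    by (simp add: partial_sum_def X0_def)
  then show ?case using Suc by (simp add: seqf_def)
qed

lemma psum_bound: "\<bar>partial_sum X0 n (seqf k \<phi>)\<bar> \<le> real n"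
  unfolding psum using tri_add_bound[OF per_pos] by blast

lemma ES: "measure_pmf.expectation pm (partial_sum X0 n) = 0"
proof -
  have s: "(\<lambda>k. (1/2)^(k+1) * avg k (partial_sum X0 n)) sums measure_pmf.expectation pm (partial_sum X0 n)"
    by (rule expect_sums[where B="real n"]) (rule psum_bound)
  have "avg k (partial_sum X0 n) = 0" for k
  proof -
    have "(\<Sum>\<phi><per k. tri (per k) (\<phi> + n)) = (\<Sum>\<phi><per k. tri (per k) \<phi>)"
      by (rule shift_sum[where G="tri (per k)"]) (simp_all add: tri_mod per_pos)
    then show ?thesis by (simp add: avg_def psum sum_subtractf)
  qed
  then show ?thesis using s sums_unique[OF sums_zero] by (simp add: sums_iff)
qed

lemma Vsums: "(\<lambda>k. w k n) sums measure_pmf.variance pm (partial_sum X0 n)"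
proof -
  have b: "\<bar>(partial_sum X0 n (seqf k \<phi>) - 0)^2\<bar> \<le> (real n)^2" for k \<phi>
    using psum_bound[of n k \<phi>] by (simp add: abs_le_square_iff[symmetric])
  have s: "(\<lambda>k. (1/2)^(k+1) * avg k (\<lambda>\<omega>. (partial_sum X0 n \<omega> - 0)^2)) sums
      measure_pmf.expectation pm (\<lambda>\<omega>. (partial_sum X0 n \<omega> - 0)^2)"
    by (rule expect_sums[where B="(real n)^2"]) (rule b)
  have "(1/2)^(k+1) * avg k (\<lambda>\<omega>. (partial_sum X0 n \<omega> - 0)^2) = w k n" for k
    by (simp add: avg_def w_def D_def psum)
  then show ?thesis using s ES by simp
qed

lemma cws: "centred_weakly_stationary (measure_pmf pm) X0"
  unfolding centred_weakly_stationary_def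
proof (intro conjI allI impI)
  fix i :: nat assume i: "1 \<le> i"
  show "X0 i \<in> borel_measurable (measure_pmf pm)" by simp
  show "integrable (measure_pmf pm) (\<lambda>\<omega>. (X0 i \<omega>)^2)"
  proof (rule measure_pmf.integrable_const_bound[where B=1])
    show "AE x in measure_pmf pm. norm ((X0 i x)^2) \<le> 1"
    proof -
      have "\<bar>(seqf k \<phi> i)^2\<bar> \<le> 1" for k \<phi>
        using seqf_bound[OF i, of k \<phi>] by (simp add: abs_square_le_1)
      then show ?thesis by (auto simp: AE_measure_pmf_iff set_pm X0_def)
    qed
  qed simp
  show "measure_pmf.expectation pm (X0 i) = 0"
  proof -
    have s: "(\<lambda>k. (1/2)^(k+1) * avg k (X0 i)) sums measure_pmf.expectation pm (X0 i)"
      by (rule expect_sums) (use seqf_bound[OF i] in \<open>simp add: X0_def\<close>)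
    have "avg k (X0 i) = 0" for k
    proof -
      have a: "(\<Sum>\<phi><per k. tri (per k) (\<phi> + i)) = (\<Sum>\<phi><per k. tri (per k) \<phi>)"
        by (rule shift_sum[where G="tri (per k)"]) (simp_all add: tri_mod per_pos)
      have b: "(\<Sum>\<phi><per k. tri (per k) (\<phi> + (i - 1))) = (\<Sum>\<phi><per k. tri (per k) \<phi>)"
        by (rule shift_sum[where G="tri (per k)"]) (simp_all add: tri_mod per_pos)
      show ?thesis using a b by (simp add: avg_def X0_def seqf_alt[OF i] sum_subtractf)
    qed
    then show ?thesis using s sums_unique[OF sums_zero] by (simp add: sums_iff)
  qed
next
  fix i j k :: nat assume i: "1 \<le> i" and j: "1 \<le> j"
  have ij: "1 \<le> i + k" "1 \<le> j + k" using i j by auto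
  have s1: "(\<lambda>m. (1/2)^(m+1) * avg m (\<lambda>\<omega>. X0 i \<omega> * X0 j \<omega>)) sums measure_pmf.expectation pm (\<lambda>\<omega>. X0 i \<omega> * X0 j \<omega>)"
    by (rule expect_sums[where B=1]) (use seqf_bound[OF i] seqf_bound[OF j] in \<open>simp add: X0_def abs_mult mult_le_one\<close>)
  have s2: "(\<lambda>m. (1/2)^(m+1) * avg m (\<lambda>\<omega>. X0 (i+k) \<omega> * X0 (j+k) \<omega>)) sums measure_pmf.expectation pm (\<lambda>\<omega>. X0 (i+k) \<omega> * X0 (j+k) \<omega>)"
    by (rule expect_sums[where B=1]) (use seqf_bound[OF ij(1)] seqf_bound[OF ij(2)] in \<open>simp add: X0_def abs_mult mult_le_one\<close>)
  have "avg m (\<lambda>\<omega>. X0 (i+k) \<omega> * X0 (j+k) \<omega>) = avg m (\<lambda>\<omega>. X0 i \<omega> * X0 j \<omega>)" for m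
  proof -
    define G where "G \<phi> = seqf m \<phi> i * seqf m \<phi> j" for \<phi>
    have per: "G (x mod per m) = G x" for x
      by (simp add: G_def seqf_alt[OF i] seqf_alt[OF j] tri_per)
    have "(\<Sum>\<phi><per m. G (\<phi> + k)) = (\<Sum>\<phi><per m. G \<phi>)" by (rule shift_sum[of G "per m" k, OF per per_pos])
    moreover have "G (\<phi> + k) = seqf m \<phi> (i+k) * seqf m \<phi> (j+k)" for \<phi>
      using i j by (simp add: G_def seqf_alt ac_simps)
    ultimately show ?thesis by (simp add: avg_def X0_def G_def)
  qed
  note avg_eq = this
  show "measure_pmf.expectation pm (\<lambda>\<omega>. X0 i \<omega> * X0 j \<omega>) =
             measure_pmf.expectation pm (\<lambda>\<omega>. X0 (i + k) \<omega> * X0 (j + k) \<omega>)" (is "?A = ?B")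
  proof -
    have "(\<lambda>m. (1/2)^(m+1) * avg m (\<lambda>\<omega>. X0 (i+k) \<omega> * X0 (j+k) \<omega>)) = (\<lambda>m. (1/2)^(m+1) * avg m (\<lambda>\<omega>. X0 i \<omega> * X0 j \<omega>))"
      using avg_eq by simp
    then have "(\<lambda>m. (1/2)^(m+1) * avg m (\<lambda>\<omega>. X0 i \<omega> * X0 j \<omega>)) sums measure_pmf.expectation pm (\<lambda>\<omega>. X0 (i+k) \<omega> * X0 (j+k) \<omega>)"
      using s2 by simp
    then show ?thesis using sums_unique2[OF s1] by simp
  qed
qed



theorem proposition2:
  shows "\<exists>(M :: (nat \<Rightarrow> real) measure) (X :: nat \<Rightarrow> (nat \<Rightarrow> real) \<Rightarrow> real).
           prob_space M \<and> centred_weakly_stationary M X \<and>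
           (\<exists>L. 0 < L \<and>
              (\<lambda>r. prob_space.variance M (partial_sum X (2^r)) / 2^r) \<longlonglongrightarrow> L) \<and>
           \<not> convergent (\<lambda>n. prob_space.variance M (partial_sum X n) / real n)"
proof (rule exI[of _ "measure_pmf pm"], rule exI[of _ X0], intro conjI)
  let ?V = "\<lambda>n. measure_pmf.variance pm (partial_sum X0 n)"
  have VA: "?V (2^r) = 5/9*2^r + 4/9/2^r" for r
    using sums_unique2[OF Vsums sumA] by simp
  have VB: "?V (3*2^r) = 11/6*2^r + 1/2/2^r" for r
    using sums_unique2[OF Vsums sumB] by simp
  have eA: "?V (2^r) / 2^r = 5/9 + 4/9 * (1/4)^r" for r
  proof -
    have x: "(2::real)^r > 0" by simp
    have "(1/4::real)^r = 1/(2^r)^2" by (rule pow_facts(3))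
    then show ?thesis unfolding VA using x by (simp add: field_simps power2_eq_square)
  qed
  have eB: "?V (3*2^r) / real (3*2^r) = 11/18 + 1/6 * (1/4)^r" for r
  proof -
    have x: "(2::real)^r > 0" by simp
    have "(1/4::real)^r = 1/(2^r)^2" by (rule pow_facts(3))
    then show ?thesis unfolding VB using x by (simp add: field_simps power2_eq_square)
  qed
  have z: "(\<lambda>r. (1/4::real)^r) \<longlonglongrightarrow> 0" by (rule LIMSEQ_realpow_zero) simp_all
  have LA: "(\<lambda>r. ?V (2^r) / 2^r) \<longlonglongrightarrow> 5/9"
  proof -
    have "(\<lambda>r. 5/9 + 4/9 * (1/4::real)^r) \<longlonglongrightarrow> 5/9 + 4/9 * 0"
      by (intro tendsto_add tendsto_const tendsto_mult z)
    then show ?thesis unfolding eA by simp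
  qed
  have LB: "(\<lambda>r. ?V (3*2^r) / real (3*2^r)) \<longlonglongrightarrow> 11/18"
  proof -
    have "(\<lambda>r. 11/18 + 1/6 * (1/4::real)^r) \<longlonglongrightarrow> 11/18 + 1/6 * 0"
      by (intro tendsto_add tendsto_const tendsto_mult z)
    then show ?thesis unfolding eB by simp
  qed
  show "prob_space (measure_pmf pm)" by (rule prob_space_measure_pmf)
  show "centred_weakly_stationary (measure_pmf pm) X0" by (rule cws)
  show "\<exists>L. 0 < L \<and> (\<lambda>r. prob_space.variance (measure_pmf pm) (partial_sum X0 (2^r)) / 2^r) \<longlonglongrightarrow> L"
    using LA by (intro exI[of _ "5/9"]) simp
  show "\<not> convergent (\<lambda>n. prob_space.variance (measure_pmf pm) (partial_sum X0 n) / real n)"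
  proof
    assume "convergent (\<lambda>n. prob_space.variance (measure_pmf pm) (partial_sum X0 n) / real n)"
    then obtain L where L: "(\<lambda>n. ?V n / real n) \<longlonglongrightarrow> L" by (auto simp: convergent_def)
    have sm1: "strict_mono (\<lambda>r::nat. (2::nat)^r)" by (rule strict_monoI) simp
    have sm2: "strict_mono (\<lambda>r::nat. 3*(2::nat)^r)" by (rule strict_monoI) simp
    have "((\<lambda>n. ?V n / real n) \<circ> (\<lambda>r. 2^r)) \<longlonglongrightarrow> L" by (rule LIMSEQ_subseq_LIMSEQ[OF L sm1])
    then have "(\<lambda>r. ?V (2^r) / 2^r) \<longlonglongrightarrow> L" by (simp add: o_def)
    then have 1: "L = 5/9" using LA LIMSEQ_unique by blast
    have "((\<lambda>n. ?V n / real n) \<circ> (\<lambda>r. 3*2^r)) \<longlonglongrightarrow> L" by (rule LIMSEQ_subseq_LIMSEQ[OF L sm2])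
    then have "(\<lambda>r. ?V (3*2^r) / real (3*2^r)) \<longlonglongrightarrow> L" by (simp add: o_def)
    then have 2: "L = 11/18" using LB LIMSEQ_unique by blast
    from 1 2 show False by simp
  qed
qed


end
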